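(* Let $k\ge1$. Suppose the density of the set of trajectories at time $k-1$ is a trajectory MBM with $n_{k-1|k-1}$ tracks, track $i$ having $h^i_{k-1|k-1}$ hypotheses with parameters $(w^{i,a^i}_{k-1|k-1}, r^{i,a^i}_{k-1|k-1}, f^{i,a^i}_{k-1|k-1})$ and histories $\mathcal{M}^{k-1}(i,a^i)$. Suppose each trajectory evolves according to the transition model for the set of all trajectories and new trajectories are born according to an independent trajectory multi-Bernoulli RFS with $n^b_k$ components with parameters $(r^{b,l}_k,f^{B,l}_k)$. Then the predicted density at time $k$ is a trajectory MBM with $n_{k|k-1}=n_{k-1|k-1}+n^b_k$ tracks, where for $i\in\{1,\dots,n_{k-1|k-1}\}$: $h^i_{k|k-1}=h^i_{k-1|k-1}$, histories unchanged, and for all $a^i$, $w^{i,a^i}_{k|k-1}=w^{i,a^i}_{k-1|k-1}$, $r^{i,a^i}_{k|k-1}=r^{i,a^i}_{k-1|k-1}$, $f^{i,a^i}_{k|k-1}(X)=\int\pi^a(X|X')f^{i,a^i}_{k-1|k-1}(X')dX'$; and for new tracks $i=n_{k-1|k-1}+l$: $h^i_{k|k-1}=1$, $\mathcal{M}^{k-1}(i,1)=\emptyset$, $w^{i,1}_{k|k-1}=1$, $r^{i,1}_{k|k-1}=r^{b,l}_k$, $f^{i,1}_{k|k-1}=f^{B,l}_k$. Global hypotheses are the old ones extended by $a^i=1$ on new tracks.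
   Context: Single target state space $\mathcal{X}=\mathbb{R}^n$. A trajectory is $X=(\beta,\varepsilon,x_{\beta:\varepsilon})$ with integers $0\le\beta\le\varepsilon\le k$ and $x_{\beta:\varepsilon}\in\mathcal{X}^{\varepsilon-\beta+1}$; trajectory space $\mathcal{T}_k=\biguplus_{0\le\beta\le\varepsilon\le k}\{\beta\}\times\{\varepsilon\}\times\mathcal{X}^{\varepsilon-\beta+1}$, $\int p(X)dX=\sum_{(\beta,\varepsilon)}\int p(\beta,\varepsilon,x_{\beta:\varepsilon})dx_{\beta:\varepsilon}$. $\Delta_a(b)$ is the Kronecker delta, $\delta$ the Dirac delta. A Bernoulli density with parameters $(r,f)$ is $1-r$ at $\emptyset$, $rf(X)$ at $\{X\}$, $0$ otherwise. A trajectory MBM with track table $\mathbb{T}=\{1,\dots,n\}$, track $i$ having hypotheses $a^i\in\{1,\dots,h^i\}$ each with weight $w^{i,a^i}$, Bernoulli parameters $(r^{i,a^i},f^{i,a^i})$ and measurement history $\mathcal{M}(i,a^i)$ (a set of pairs $(\tau,j)$, at most one per time $\tau$), is the density $f(\mathbf{X})=\sum_{a\in\mathcal{A}}w^a\sum_{\uplus_{i}\mathbf{X}^i=\mathbf{X}}\prod_{i}f^{i,a^i}(\mathbf{X}^i)$, with $f^{i,a^i}(\cdot)$ the Bernoulli density with parameters $(r^{i,a^i},f^{i,a^i})$, $\mathcal{A}$ the set of $a=(a^1,\dots,a^n)$ with pairwise disjoint histories (subsets of the received measurement indices), and $w^a\propto\prod_iw^{i,a^i}$. Transition model for the set of all trajectories: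 each trajectory $X'$ at time $k-1$ remains in the set with probability one and becomes $X$ with density $\pi^a(X|X')=\pi^{a,x}(x_{\beta:\varepsilon}|\beta,\varepsilon,X')\pi^\varepsilon(\varepsilon|\beta,X')\Delta_{\beta'}(\beta)$, where $\pi^\varepsilon(\varepsilon|\beta,X')$ equals $1$ if $\varepsilon=\varepsilon'<k-1$, $1-P^S_{k-1}(X')$ if $\varepsilon=\varepsilon'=k-1$, $P^S_{k-1}(X')$ if $\varepsilon=\varepsilon'+1=k$, and $0$ otherwise, with $P^S_{k-1}(X')=P^S(x'_{\varepsilon'})\Delta_{k-1}(\varepsilon')$; and $\pi^{a,x}=\delta_{x'_{\beta':\varepsilon'}}(x_{\beta:\varepsilon})$ if $\varepsilon=\varepsilon'$, $\pi^{a,x}=\pi^x(x_\varepsilon|x'_{\varepsilon'})\delta_{x'_{\beta':\varepsilon'}}(x_{\beta:\varepsilon-1})$ if $\varepsilon=\varepsilon'+1$, $\pi^x$ the single-target Markov transition density. Trajectories evolve independently. Birth densities: $f^{B,l}_k(X)=f^{b,l}_k(x_k)\Delta_k(\beta)\Delta_k(\varepsilon)$. *)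

theory Defs
  imports "HOL-Analysis.Analysis"
begin

text \<open>A trajectory X = (beta, epsilon, x_{beta:epsilon}); the states are stored as a list,
  the state at time t being the (t - beta)-th entry.\<close>

datatype 'x traj = Traj (tbeg: nat) (tend: nat) (tstates: "'x list")

definition st :: "'x traj \<Rightarrow> nat \<Rightarrow> 'x" where
  "st X t = tstates X ! (t - tbeg X)"

definition traj_space :: "nat \<Rightarrow> 'x traj set" where
  "traj_space k = {X. tbeg X \<le> tend X \<and> tend X \<le> k \<and> length (tstates X) = tend X - tbeg X + 1}"

section \<open>Bernoulli, multi-Bernoulli and MBM densities (on lists = labelled points of a finite set)\<close>

definition bern_dens :: "real \<Rightarrow> ('x traj \<Rightarrow> ennreal) \<Rightarrow> 'x traj list \<Rightarrow> ennreal" where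
  "bern_dens r f Ys = (case Ys of [] \<Rightarrow> ennreal (1 - r) | [X] \<Rightarrow> ennreal r * f X | _ \<Rightarrow> 0)"

text \<open>Multi-Bernoulli density with components 1..n: the sum over all decompositions
  X = X^1 \<uplus> ... \<uplus> X^n (assignment c of each point of X to a component).\<close>
definition mb_dens :: "nat \<Rightarrow> (nat \<Rightarrow> real) \<Rightarrow> (nat \<Rightarrow> 'x traj \<Rightarrow> ennreal) \<Rightarrow> 'x traj list \<Rightarrow> ennreal" where
  "mb_dens n r f Xs =
     (\<Sum>c \<in> {..<length Xs} \<rightarrow>\<^sub>E {1..n}.
        \<Prod>i\<in>{1..n}. bern_dens (r i) (f i) [Xs ! j. j \<leftarrow> [0..<length Xs], c j = i])"

definition glob_hyps :: "nat \<Rightarrow> (nat \<Rightarrow> nat) \<Rightarrow> (nat \<Rightarrow> nat \<Rightarrow> (nat \<times> nat) set) \<Rightarrow> (nat \<Rightarrow> nat) set" where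
  "glob_hyps n h M = {a \<in> Pi\<^sub>E {1..n} (\<lambda>i. {1..h i}).
      \<forall>i\<in>{1..n}. \<forall>j\<in>{1..n}. i \<noteq> j \<longrightarrow> M i (a i) \<inter> M j (a j) = {}}"

definition glob_weight ::
  "nat \<Rightarrow> (nat \<Rightarrow> nat) \<Rightarrow> (nat \<Rightarrow> nat \<Rightarrow> real) \<Rightarrow> (nat \<Rightarrow> nat \<Rightarrow> (nat \<times> nat) set) \<Rightarrow> (nat \<Rightarrow> nat) \<Rightarrow> real" where
  "glob_weight n h w M a = (\<Prod>i\<in>{1..n}. w i (a i)) / (\<Sum>b\<in>glob_hyps n h M. \<Prod>i\<in>{1..n}. w i (b i))"

definition mbm_dens ::
  "nat \<Rightarrow> (nat \<Rightarrow> nat) \<Rightarrow> (nat \<Rightarrow> nat \<Rightarrow> real) \<Rightarrow> (nat \<Rightarrow> nat \<Rightarrow> real)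
   \<Rightarrow> (nat \<Rightarrow> nat \<Rightarrow> 'x traj \<Rightarrow> ennreal) \<Rightarrow> (nat \<Rightarrow> nat \<Rightarrow> (nat \<times> nat) set) \<Rightarrow> 'x traj list \<Rightarrow> ennreal" where
  "mbm_dens n h w r f M Xs =
     (\<Sum>a\<in>glob_hyps n h M. ennreal (glob_weight n h w M a) *
         mb_dens n (\<lambda>i. r i (a i)) (\<lambda>i. f i (a i)) Xs)"

definition PS_traj :: "nat \<Rightarrow> ('x \<Rightarrow> real) \<Rightarrow> 'x traj \<Rightarrow> real" where
  "PS_traj k PS X' = (if tend X' = k - 1 then PS (st X' (tend X')) else 0)"

definition pi_eps :: "nat \<Rightarrow> ('x \<Rightarrow> real) \<Rightarrow> nat \<Rightarrow> 'x traj \<Rightarrow> real" where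
  "pi_eps k PS e X' =
     (if e = tend X' \<and> tend X' < k - 1 then 1
      else if e = tend X' \<and> tend X' = k - 1 then 1 - PS_traj k PS X'
      else if e = tend X' + 1 \<and> e = k then PS_traj k PS X'
      else 0)"

text \<open>pi^a(X|X') contains Dirac deltas delta_{x'}(.) in the state sequence. We represent it by
  the coefficient of the Dirac delta: integrating g(X') pi^a(X|X') dX' over X' is the sum over X'
  of g(X') times this coefficient (Dirac mass = point mass).\<close>
definition pi_coef :: "nat \<Rightarrow> ('x \<Rightarrow> real) \<Rightarrow> ('x \<Rightarrow> 'x \<Rightarrow> real) \<Rightarrow> 'x traj \<Rightarrow> 'x traj \<Rightarrow> real" where
  "pi_coef k PS pix X X' =
     (if tbeg X = tbeg X' then
        (if tend X = tend X' then
           (if tstates X = tstates X' then pi_eps k PS (tend X) X' else 0)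
         else if tend X = tend X' + 1 then
           (if butlast (tstates X) = tstates X'
            then pix (st X (tend X)) (st X' (tend X')) * pi_eps k PS (tend X) X' else 0)
         else 0)
      else 0)"

definition traj_pred :: "nat \<Rightarrow> ('x \<Rightarrow> real) \<Rightarrow> ('x \<Rightarrow> 'x \<Rightarrow> real) \<Rightarrow> ('x traj \<Rightarrow> ennreal) \<Rightarrow> 'x traj \<Rightarrow> ennreal" where
  "traj_pred k PS pix g X = (\<integral>\<^sup>+ X'. ennreal (pi_coef k PS pix X X') * g X' \<partial>count_space UNIV)"

text \<open>Transition of the surviving set (every trajectory stays in the set with probability one):
  T(Y|X') = sum over bijections of prod pi^a(Y_sigma(j)|X'_j) (Dirac coefficients).\<close>
definition surv_trans :: "nat \<Rightarrow> ('x \<Rightarrow> real) \<Rightarrow> ('x \<Rightarrow> 'x \<Rightarrow> real) \<Rightarrow> 'x traj list \<Rightarrow> 'x traj list \<Rightarrow> ennreal" where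
  "surv_trans k PS pix Ys Xs' =
     (if length Ys = length Xs' then
        (\<Sum>\<sigma>\<in>{\<sigma>. \<sigma> permutes {..<length Ys}}.
            \<Prod>j<length Ys. ennreal (pi_coef k PS pix (Ys ! \<sigma> j) (Xs' ! j)))
      else 0)"

definition set_trans :: "nat \<Rightarrow> ('x \<Rightarrow> real) \<Rightarrow> ('x \<Rightarrow> 'x \<Rightarrow> real) \<Rightarrow> ('x traj list \<Rightarrow> ennreal)
    \<Rightarrow> 'x traj list \<Rightarrow> 'x traj list \<Rightarrow> ennreal" where
  "set_trans k PS pix fbirth Xs Xs' =
     (\<Sum>S\<in>Pow {..<length Xs}. fbirth (nths Xs ({..<length Xs} - S)) * surv_trans k PS pix (nths Xs S) Xs')"

text \<open>Set integral  \<integral> G(X') \<delta>X' = sum_m 1/m! \<integral> G({X'_1,...,X'_m}) dX'_1...dX'_m,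
  for integrands G whose dependence on X' is through Dirac deltas (represented by coefficients).\<close>
definition set_int_dirac :: "('x traj list \<Rightarrow> ennreal) \<Rightarrow> ennreal" where
  "set_int_dirac G = (\<Sum>m. ennreal (1 / fact m) * (\<integral>\<^sup>+ Xs'. G Xs' \<partial>count_space {Xs'. length Xs' = m}))"

definition ck_pred :: "nat \<Rightarrow> ('x \<Rightarrow> real) \<Rightarrow> ('x \<Rightarrow> 'x \<Rightarrow> real) \<Rightarrow> ('x traj list \<Rightarrow> ennreal)
    \<Rightarrow> ('x traj list \<Rightarrow> ennreal) \<Rightarrow> 'x traj list \<Rightarrow> ennreal" where
  "ck_pred k PS pix fbirth fprev Xs = set_int_dirac (\<lambda>Xs'. set_trans k PS pix fbirth Xs Xs' * fprev Xs')"

definition birth_traj :: "nat \<Rightarrow> ('x \<Rightarrow> ennreal) \<Rightarrow> 'x traj \<Rightarrow> ennreal" where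
  "birth_traj k fb X = (if tbeg X = k \<and> tend X = k then fb (st X k) else 0)"

end

theory Submission
  imports Defs
begin


definition Bset :: "real \<Rightarrow> ('a \<Rightarrow> ennreal) \<Rightarrow> nat set \<Rightarrow> (nat \<Rightarrow> 'a) \<Rightarrow> ennreal" where
  "Bset r f J x = (if J = {} then ennreal (1-r) else if card J = 1 then ennreal r * f (x (the_elem J)) else 0)"

definition MB :: "nat \<Rightarrow> (nat \<Rightarrow> real) \<Rightarrow> (nat \<Rightarrow> 'a \<Rightarrow> ennreal) \<Rightarrow> nat set \<Rightarrow> (nat \<Rightarrow> 'a) \<Rightarrow> ennreal" where
  "MB n R F I x = (\<Sum>c \<in> I \<rightarrow>\<^sub>E {1..n}. \<Prod>i\<in>{1..n}. Bset (R i) (F i) {j\<in>I. c j = i} x)"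

lemma concat_map_if_single:
  "concat (map (\<lambda>j. if P j then [g j] else []) js) = map g (filter P js)"
  by (induction js) auto

lemma bern_map:
  assumes "distinct js"
  shows "bern_dens r f (map x js) = Bset r f (set js) x"
proof (cases js)
  case Nil then show ?thesis by (simp add: bern_dens_def Bset_def)
next
  case (Cons a t)
  show ?thesis
  proof (cases t)
    case Nil then show ?thesis using Cons by (simp add: bern_dens_def Bset_def)
  next
    case (Cons b u)
    have "card (set js) = length js" using assms by (simp add: distinct_card)
    then have "card (set js) \<ge> 2" using Cons \<open>js = a # t\<close> by simp
    then show ?thesis using Cons \<open>js = a # t\<close> by (auto simp: bern_dens_def Bset_def)
  qed
qed

lemma mb_MB: "mb_dens n R F xs = MB n R F {..<length xs} (nth xs)"
  unfolding mb_dens_def MB_def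
proof (intro sum.cong refl prod.cong)
  fix c :: "nat \<Rightarrow> nat" and i :: nat
  have "[xs ! j. j \<leftarrow> [0..<length xs], c j = i] = map ((!) xs) (filter (\<lambda>j. c j = i) [0..<length xs])"
    by (simp add: concat_map_if_single)
  moreover have "set (filter (\<lambda>j. c j = i) [0..<length xs]) = {j\<in>{..<length xs}. c j = i}" by auto
  ultimately show "bern_dens (R i) (F i) [xs ! j. j \<leftarrow> [0..<length xs], c j = i] =
         Bset (R i) (F i) {j \<in> {..<length xs}. c j = i} ((!) xs)"
    by (metis bern_map distinct_filter distinct_upt)
qed

lemma Bset_image:
  assumes "inj_on e J" "finite J"
  shows "Bset r f (e ` J) x = Bset r f J (x \<circ> e)"
proof -
  have c: "card (e ` J) = card J" using assms card_image by blast
  show ?thesis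
  proof (cases "card J = 1")
    case True
    then obtain j where "J = {j}" by (auto simp: card_1_singleton_iff)
    then show ?thesis by (simp add: Bset_def)
  next
    case False
    then show ?thesis using c by (simp add: Bset_def)
  qed
qed

lemma Bset_cong: "(\<And>j. j \<in> J \<Longrightarrow> x j = y j) \<Longrightarrow> finite J \<Longrightarrow> Bset r f J x = Bset r f J y"
  unfolding Bset_def by (auto simp: card_1_singleton_iff)

lemma MB_cong_x:
  assumes "\<And>j. j \<in> I \<Longrightarrow> x j = y j" "finite I"
  shows "MB n R F I x = MB n R F I y"
  unfolding MB_def
  by (intro sum.cong refl prod.cong Bset_cong) (use assms in auto)

lemma MB_cong_RF:
  assumes "\<And>i. i \<in> {1..n} \<Longrightarrow> R i = R' i" "\<And>i. i \<in> {1..n} \<Longrightarrow> F i = F' i"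
  shows "MB n R F I x = MB n R' F' I x"
  unfolding MB_def using assms by (intro sum.cong refl prod.cong) auto

lemma MB_reindex:
  assumes e: "bij_betw e I' I" and fin: "finite I"
  shows "MB n R F I x = MB n R F I' (x \<circ> e)"
proof -
  define \<psi> where "\<psi> c = restrict (c \<circ> e) I'" for c :: "nat \<Rightarrow> nat"
  define \<phi> where "\<phi> c' = restrict (c' \<circ> inv_into I' e) I" for c' :: "nat \<Rightarrow> nat"
  have fin': "finite I'" using e fin bij_betw_finite by blast
  have b: "bij_betw \<psi> (I \<rightarrow>\<^sub>E {1..n}) (I' \<rightarrow>\<^sub>E {1..n})"
  proof (rule bij_betwI[where g = \<phi>])
    show "\<psi> \<in> (I \<rightarrow>\<^sub>E {1..n}) \<rightarrow> (I' \<rightarrow>\<^sub>E {1..n})"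
      using e by (auto simp: \<psi>_def bij_betw_def)
    show "\<phi> \<in> (I' \<rightarrow>\<^sub>E {1..n}) \<rightarrow> (I \<rightarrow>\<^sub>E {1..n})"
      using e by (auto simp: \<phi>_def bij_betw_def inv_into_into)
    fix c assume "c \<in> I \<rightarrow>\<^sub>E {1..n}"
    then show "\<phi> (\<psi> c) = c"
      using e by (auto simp: \<phi>_def \<psi>_def bij_betw_def fun_eq_iff inv_into_into f_inv_into_f PiE_def extensional_def)
  next
    fix c assume "c \<in> I' \<rightarrow>\<^sub>E {1..n}"
    then show "\<psi> (\<phi> c) = c"
      using e by (auto simp: \<phi>_def \<psi>_def bij_betw_def fun_eq_iff PiE_def extensional_def)
  qed
  have "MB n R F I' (x \<circ> e) = (\<Sum>c\<in>I \<rightarrow>\<^sub>E {1..n}. \<Prod>i\<in>{1..n}. Bset (R i) (F i) {j\<in>I'. \<psi> c j = i} (x \<circ> e))"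
    unfolding MB_def by (rule sum.reindex_bij_betw[OF b, symmetric])
  also have "\<dots> = MB n R F I x"
    unfolding MB_def
  proof (intro sum.cong refl prod.cong)
    fix c i
    have "{j\<in>I. c j = i} = e ` {j\<in>I'. \<psi> c j = i}"
      using e by (auto simp: \<psi>_def bij_betw_def)
    moreover have "inj_on e {j\<in>I'. \<psi> c j = i}" using e by (auto simp: bij_betw_def inj_on_def)
    ultimately show "Bset (R i) (F i) {j \<in> I'. \<psi> c j = i} (x \<circ> e) = Bset (R i) (F i) {j \<in> I. c j = i} x"
      using Bset_image fin' by (metis (no_types, lifting) finite_subset mem_Collect_eq subsetI)
  qed
  finally show ?thesis by simp
qed

lemma MB_map:
  assumes "distinct js"
  shows "mb_dens n R F (map x js) = MB n R F (set js) x"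
proof -
  have "mb_dens n R F (map x js) = MB n R F {..<length js} (x \<circ> nth js)"
    unfolding mb_MB length_map by (intro MB_cong_x) auto
  also have "\<dots> = MB n R F (set js) x"
    by (rule MB_reindex[symmetric]) (use assms bij_betw_nth in auto)
  finally show ?thesis .
qed

lemma nths_map_filter: "nths xs S = map ((!) xs) (filter (\<lambda>i. i\<in>S) [0..<length xs])"
proof (induction xs arbitrary: S)
  case Nil then show ?case by simp
next
  case (Cons a xs)
  have u: "[0..<Suc (length xs)] = 0 # map Suc [0..<length xs]"
    by (subst map_Suc_upt) (simp add: upt_conv_Cons del: upt_Suc)
  show ?case
    by (simp add: nths_Cons Cons.IH u filter_map o_def del: upt_Suc)
qed

lemma mb_nths:
  assumes "S \<subseteq> {..<length xs}"
  shows "mb_dens n R F (nths xs S) = MB n R F S (nth xs)"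
proof -
  have "set (filter (\<lambda>i. i\<in>S) [0..<length xs]) = S" using assms by auto
  then show ?thesis unfolding nths_map_filter by (metis MB_map distinct_filter distinct_upt)
qed



lemma MB_union:
  assumes fin: "finite L"
  shows "MB (n+nb) (\<lambda>i. if i \<le> n then R i else rb (i-n)) (\<lambda>i. if i \<le> n then F i else Fb (i-n)) L x
       = (\<Sum>S\<in>Pow L. MB nb rb Fb (L - S) x * MB n R F S x)"
proof -
  define R'' where "R'' = (\<lambda>i. if i \<le> n then R i else rb (i-n))"
  define F'' where "F'' = (\<lambda>i. if i \<le> n then F i else Fb (i-n))"
  define C where "C = L \<rightarrow>\<^sub>E {1..n+nb}"
  define T where "T c = (\<Prod>i\<in>{1..n+nb}. Bset (R'' i) (F'' i) {j\<in>L. c j = i} x)" for c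
  define Sof where "Sof c = {j\<in>L. c j \<le> n}" for c :: "nat \<Rightarrow> nat"
  define P1 where "P1 S c1 = (\<Prod>i\<in>{1..n}. Bset (R i) (F i) {j\<in>S. c1 j = i} x)" for S c1
  define P2 where "P2 S c2 = (\<Prod>l\<in>{1..nb}. Bset (rb l) (Fb l) {j\<in>L - S. c2 j = l} x)" for S c2
  have finC: "finite C" unfolding C_def using fin by (simp add: finite_PiE)
  have "MB (n+nb) R'' F'' L x = sum T C" unfolding MB_def T_def C_def ..
  also have "\<dots> = (\<Sum>S\<in>Pow L. \<Sum>c\<in>{c\<in>C. Sof c = S}. T c)"
    by (rule sum.group[symmetric]) (use finC fin in \<open>auto simp: Sof_def\<close>)
  also have "\<dots> = (\<Sum>S\<in>Pow L. MB nb rb Fb (L - S) x * MB n R F S x)"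
  proof (rule sum.cong[OF refl])
    fix S assume S: "S \<in> Pow L"
    define h where "h p = (\<lambda>j. if j \<in> S then fst p j else if j \<in> L then snd p j + n else undefined)"
      for p :: "(nat \<Rightarrow> nat) \<times> (nat \<Rightarrow> nat)"
    define A where "A = S \<rightarrow>\<^sub>E {1..n}"
    define B where "B = (L - S) \<rightarrow>\<^sub>E {1..nb}"
    have bij: "bij_betw h (A \<times> B) {c\<in>C. Sof c = S}"
    proof (rule bij_betwI[where g = "\<lambda>c. (restrict c S, restrict (\<lambda>j. c j - n) (L - S))"])
      show "h \<in> A \<times> B \<rightarrow> {c \<in> C. Sof c = S}"
        using S by (auto simp: h_def A_def B_def C_def Sof_def PiE_def Pi_def extensional_def)
      show "(\<lambda>c. (restrict c S, restrict (\<lambda>j. c j - n) (L - S))) \<in> {c \<in> C. Sof c = S} \<rightarrow> A \<times> B"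
        using S by (fastforce simp: A_def B_def C_def Sof_def PiE_def Pi_def extensional_def)
      fix p assume "p \<in> A \<times> B"
      then show "(restrict (h p) S, restrict (\<lambda>j. h p j - n) (L - S)) = p"
        by (cases p) (auto simp: h_def A_def B_def PiE_def extensional_def fun_eq_iff)
    next
      fix c assume "c \<in> {c \<in> C. Sof c = S}"
      then show "h (restrict c S, restrict (\<lambda>j. c j - n) (L - S)) = c"
        using S by (auto simp: h_def C_def Sof_def PiE_def Pi_def extensional_def fun_eq_iff)
    qed
    have Tsplit: "T (h p) = P1 S (fst p) * P2 S (snd p)" if p: "p \<in> A \<times> B" for p
    proof -
      have e1: "{1..n+nb} = {1..n} \<union> {n+1..n+nb}" by auto
      have "T (h p) = (\<Prod>i\<in>{1..n}. Bset (R'' i) (F'' i) {j\<in>L. h p j = i} x) *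
                      (\<Prod>i\<in>{n+1..n+nb}. Bset (R'' i) (F'' i) {j\<in>L. h p j = i} x)"
        unfolding T_def e1 by (rule prod.union_disjoint) auto
      also have "(\<Prod>i\<in>{1..n}. Bset (R'' i) (F'' i) {j\<in>L. h p j = i} x) = P1 S (fst p)"
        unfolding P1_def
      proof (rule prod.cong[OF refl])
        fix i assume i: "i \<in> {1..n}"
        have "{j\<in>L. h p j = i} = {j\<in>S. fst p j = i}" using S i p by (auto simp: h_def B_def PiE_def Pi_def)
        then show "Bset (R'' i) (F'' i) {j\<in>L. h p j = i} x = Bset (R i) (F i) {j\<in>S. fst p j = i} x"
          using i by (simp add: R''_def F''_def)
      qed
      also have "(\<Prod>i\<in>{n+1..n+nb}. Bset (R'' i) (F'' i) {j\<in>L. h p j = i} x)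
             = (\<Prod>l\<in>{1..nb}. Bset (R'' (l+n)) (F'' (l+n)) {j\<in>L. h p j = l+n} x)"
        using prod.shift_bounds_cl_nat_ivl[of "\<lambda>i. Bset (R'' i) (F'' i) {j\<in>L. h p j = i} x" 1 n nb]
        by (simp add: add.commute)
      also have "\<dots> = P2 S (snd p)"
        unfolding P2_def
      proof (rule prod.cong[OF refl])
        fix l assume l: "l \<in> {1..nb}"
        have "{j\<in>L. h p j = l+n} = {j\<in>L - S. snd p j = l}"
          using S l p by (auto simp: h_def A_def PiE_def Pi_def)
        then show "Bset (R'' (l+n)) (F'' (l+n)) {j\<in>L. h p j = l+n} x = Bset (rb l) (Fb l) {j\<in>L - S. snd p j = l} x"
          using l by (simp add: R''_def F''_def)
      qed
      finally show ?thesis .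
    qed
    have "(\<Sum>c\<in>{c\<in>C. Sof c = S}. T c) = (\<Sum>p\<in>A \<times> B. T (h p))"
      by (rule sum.reindex_bij_betw[OF bij, symmetric])
    also have "\<dots> = (\<Sum>p\<in>A \<times> B. P1 S (fst p) * P2 S (snd p))"
      by (rule sum.cong[OF refl]) (use Tsplit in auto)
    also have "\<dots> = (\<Sum>c1\<in>A. P1 S c1) * (\<Sum>c2\<in>B. P2 S c2)"
      by (simp add: sum_product sum.cartesian_product case_prod_beta)
    also have "\<dots> = MB nb rb Fb (L - S) x * MB n R F S x"
      by (simp add: MB_def P1_def P2_def A_def B_def mult.commute)
    finally show "(\<Sum>c\<in>{c\<in>C. Sof c = S}. T c) = MB nb rb Fb (L - S) x * MB n R F S x" .
  qed
  finally show ?thesis unfolding R''_def F''_def .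
qed



lemma T_inj:
  fixes n :: nat and c :: "nat \<Rightarrow> nat"
  assumes c: "c \<in> I \<rightarrow>\<^sub>E {1..n}" and fin: "finite I" and inj: "inj_on c I"
  shows "(\<Prod>i\<in>{1..n}. Bset (R i) (F i) {j\<in>I. c j = i} x)
       = (\<Prod>i\<in>{1..n} - c ` I. ennreal (1 - R i)) * (\<Prod>j\<in>I. ennreal (R (c j)) * F (c j) (x j))"
proof -
  have sub: "c ` I \<subseteq> {1..n}" using c by auto
  have e: "{1..n} = ({1..n} - c ` I) \<union> c ` I" using sub by auto
  have "(\<Prod>i\<in>{1..n}. Bset (R i) (F i) {j\<in>I. c j = i} x)
      = (\<Prod>i\<in>{1..n} - c ` I. Bset (R i) (F i) {j\<in>I. c j = i} x) * (\<Prod>i\<in>c ` I. Bset (R i) (F i) {j\<in>I. c j = i} x)"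
    by (rule prod.subset_diff[OF sub]) simp
  also have "(\<Prod>i\<in>{1..n} - c ` I. Bset (R i) (F i) {j\<in>I. c j = i} x) = (\<Prod>i\<in>{1..n} - c ` I. ennreal (1 - R i))"
    by (rule prod.cong[OF refl]) (auto simp: Bset_def)
  also have "(\<Prod>i\<in>c ` I. Bset (R i) (F i) {j\<in>I. c j = i} x) = (\<Prod>j\<in>I. Bset (R (c j)) (F (c j)) {j'\<in>I. c j' = c j} x)"
    by (rule prod.reindex[OF inj, unfolded comp_def])
  also have "\<dots> = (\<Prod>j\<in>I. ennreal (R (c j)) * F (c j) (x j))"
  proof (rule prod.cong[OF refl])
    fix j assume j: "j \<in> I"
    have "{j'\<in>I. c j' = c j} = {j}" using inj j by (auto simp: inj_on_def)
    then show "Bset (R (c j)) (F (c j)) {j'\<in>I. c j' = c j} x = ennreal (R (c j)) * F (c j) (x j)"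
      by (simp add: Bset_def)
  qed
  finally show ?thesis .
qed

lemma T_noninj:
  fixes n :: nat and c :: "nat \<Rightarrow> nat"
  assumes c: "c \<in> I \<rightarrow>\<^sub>E {1..n}" and fin: "finite I" and inj: "\<not> inj_on c I"
  shows "(\<Prod>i\<in>{1..n}. Bset (R i) (F i) {j\<in>I. c j = i} x) = 0"
proof -
  obtain j1 j2 where j: "j1 \<in> I" "j2 \<in> I" "j1 \<noteq> j2" "c j1 = c j2" using inj by (auto simp: inj_on_def)
  have i: "c j1 \<in> {1..n}" using c j by auto
  have "{j1, j2} \<subseteq> {j\<in>I. c j = c j1}" using j by auto
  then have "card {j1,j2} \<le> card {j\<in>I. c j = c j1}" by (intro card_mono) (use fin in auto)
  then have "card {j\<in>I. c j = c j1} \<ge> 2" using j by simp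
  moreover have "{j\<in>I. c j = c j1} \<noteq> {}" using j by auto
  ultimately have "Bset (R (c j1)) (F (c j1)) {j\<in>I. c j = c j1} x = 0" by (auto simp: Bset_def)
  then show ?thesis using i by (intro prod_zero) auto
qed

lemma sum_lists_prod:
  fixes g :: "nat \<Rightarrow> 'a \<Rightarrow> 'b::comm_semiring_1"
  assumes "finite A"
  shows "(\<Sum>xs\<in>{xs. set xs \<subseteq> A \<and> length xs = m}. \<Prod>j<m. g j (xs!j)) = (\<Prod>j<m. \<Sum>x\<in>A. g j x)"
proof (induction m arbitrary: g)
  case 0
  have "{xs. set xs \<subseteq> A \<and> length xs = 0} = {[]}" by auto
  then show ?case by simp
next
  case (Suc m)
  define LA where "LA = {xs. set xs \<subseteq> A \<and> length xs = m}"
  have finLA: "finite LA" unfolding LA_def using finite_lists_length_eq[OF assms] by simp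
  have e: "{xs. set xs \<subseteq> A \<and> length xs = Suc m} = (\<lambda>(x,xs). x#xs) ` (A \<times> LA)"
    unfolding LA_def by (auto simp: image_def length_Suc_conv)
  have inj: "inj_on (\<lambda>(x,xs). x#xs) (A \<times> LA)" by (auto simp: inj_on_def)
  have "(\<Sum>xs\<in>{xs. set xs \<subseteq> A \<and> length xs = Suc m}. \<Prod>j<Suc m. g j (xs!j))
      = (\<Sum>p\<in>A \<times> LA. \<Prod>j<Suc m. g j ((fst p # snd p)!j))"
    unfolding e by (subst sum.reindex[OF inj]) (simp add: case_prod_beta)
  also have "\<dots> = (\<Sum>x\<in>A. \<Sum>xs\<in>LA. g 0 x * (\<Prod>j<m. g (Suc j) (xs!j)))"
    unfolding sum.cartesian_product by (simp only: prod.lessThan_Suc_shift) (simp add: case_prod_beta del: prod.lessThan_Suc; rule sum.swap)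
  also have "\<dots> = (\<Sum>x\<in>A. g 0 x) * (\<Sum>xs\<in>LA. \<Prod>j<m. g (Suc j) (xs!j))"
    by (rule sum_product[symmetric])
  also have "\<dots> = (\<Sum>x\<in>A. g 0 x) * (\<Prod>j<m. \<Sum>x\<in>A. g (Suc j) x)"
    unfolding LA_def using Suc.IH[of "\<lambda>j. g (Suc j)"] by simp
  also have "\<dots> = (\<Prod>j<Suc m. \<Sum>x\<in>A. g j x)" by (simp only: prod.lessThan_Suc_shift)
  finally show ?case .
qed

lemma PI:
  fixes g :: "nat \<Rightarrow> 'a \<Rightarrow> ennreal"
  assumes A: "finite A" and z: "\<And>j x. j < m \<Longrightarrow> x \<notin> A \<Longrightarrow> g j x = 0"
  shows "(\<integral>\<^sup>+ xs. (\<Prod>j<m. g j (xs!j)) \<partial>count_space {xs. length xs = m}) = (\<Prod>j<m. \<Sum>x\<in>A. g j x)"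
proof -
  have "(\<integral>\<^sup>+ xs. (\<Prod>j<m. g j (xs!j)) \<partial>count_space {xs. length xs = m})
     = (\<Sum>xs\<in>{xs. set xs \<subseteq> A \<and> length xs = m}. \<Prod>j<m. g j (xs!j))"
  proof (rule nn_integral_count_space')
    show "finite {xs. set xs \<subseteq> A \<and> length xs = m}" using finite_lists_length_eq[OF A] by simp
    fix xs assume "xs \<in> {xs. length xs = m}" "xs \<notin> {xs. set xs \<subseteq> A \<and> length xs = m}"
    then obtain j where "j < m" "xs ! j \<notin> A" by (auto simp: set_conv_nth)
    then show "(\<Prod>j<m. g j (xs!j)) = 0" using z by (intro prod_zero) auto
  qed auto
  also have "\<dots> = (\<Prod>j<m. \<Sum>x\<in>A. g j x)" by (rule sum_lists_prod[OF A])
  finally show ?thesis .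
qed

lemma pred_mb:
  fixes K :: "'a traj \<Rightarrow> 'a traj \<Rightarrow> ennreal" and supp :: "'a traj \<Rightarrow> 'a traj set"
  assumes fs: "\<And>Y. finite (supp Y)" and ks: "\<And>Y X. X \<notin> supp Y \<Longrightarrow> K Y X = 0"
  shows "(\<integral>\<^sup>+ xs. (\<Prod>j<length Ys. K (Ys!j) (xs!j)) * mb_dens n R F xs \<partial>count_space {xs. length xs = length Ys})
       = mb_dens n R (\<lambda>i Y. \<integral>\<^sup>+X. K Y X * F i X \<partial>count_space UNIV) Ys"
proof -
  define m where "m = length Ys"
  define A where "A = (\<Union>j<m. supp (Ys!j))"
  have finA: "finite A" unfolding A_def using fs by auto
  define P where "P = (\<lambda>i Y. \<integral>\<^sup>+X. K Y X * F i X \<partial>count_space UNIV)"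
  have Pval: "P i (Ys!j) = (\<Sum>X\<in>A. K (Ys!j) X * F i X)" if "j < m" for i j
    unfolding P_def
    by (rule nn_integral_count_space'[OF finA]) (use that ks in \<open>auto simp: A_def\<close>)
  define C where "C = {..<m} \<rightarrow>\<^sub>E {1..n}"
  define T where "T c xs = (\<Prod>i\<in>{1..n}. Bset (R i) (F i) {j\<in>{..<m}. c j = i} ((!) xs))" for c xs
  define Cst where "Cst c = (\<Prod>i\<in>{1..n} - c ` {..<m}. ennreal (1 - R i))" for c :: "nat \<Rightarrow> nat"
  have "(\<integral>\<^sup>+ xs. (\<Prod>j<m. K (Ys!j) (xs!j)) * mb_dens n R F xs \<partial>count_space {xs. length xs = m})
      = (\<integral>\<^sup>+ xs. (\<Sum>c\<in>C. (\<Prod>j<m. K (Ys!j) (xs!j)) * T c xs) \<partial>count_space {xs. length xs = m})"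
    by (rule nn_integral_cong) (simp add: mb_MB MB_def C_def T_def sum_distrib_left)
  also have "\<dots> = (\<Sum>c\<in>C. \<integral>\<^sup>+ xs. (\<Prod>j<m. K (Ys!j) (xs!j)) * T c xs \<partial>count_space {xs. length xs = m})"
    by (rule nn_integral_sum) simp
  also have "\<dots> = (\<Sum>c\<in>C. \<Prod>i\<in>{1..n}. Bset (R i) (P i) {j\<in>{..<m}. c j = i} ((!) Ys))"
  proof (rule sum.cong[OF refl])
    fix c assume c: "c \<in> C"
    show "(\<integral>\<^sup>+ xs. (\<Prod>j<m. K (Ys!j) (xs!j)) * T c xs \<partial>count_space {xs. length xs = m})
        = (\<Prod>i\<in>{1..n}. Bset (R i) (P i) {j\<in>{..<m}. c j = i} ((!) Ys))"
    proof (cases "inj_on c {..<m}")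
      case False
      have "T c xs = 0" for xs using c T_noninj[OF _ _ False] by (simp add: T_def C_def)
      moreover have "(\<Prod>i\<in>{1..n}. Bset (R i) (P i) {j\<in>{..<m}. c j = i} ((!) Ys)) = 0"
        using c T_noninj[OF _ _ False] by (simp add: C_def)
      ultimately show ?thesis by simp
    next
      case True
      define g where "g j X = K (Ys!j) X * (ennreal (R (c j)) * F (c j) X)" for j X
      have "(\<integral>\<^sup>+ xs. (\<Prod>j<m. K (Ys!j) (xs!j)) * T c xs \<partial>count_space {xs. length xs = m})
          = (\<integral>\<^sup>+ xs. Cst c * (\<Prod>j<m. g j (xs!j)) \<partial>count_space {xs. length xs = m})"
      proof (rule nn_integral_cong)
        fix xs
        have "T c xs = Cst c * (\<Prod>j<m. ennreal (R (c j)) * F (c j) (xs ! j))"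
          unfolding T_def Cst_def by (rule T_inj[OF c[unfolded C_def] _ True]) simp
        then show "(\<Prod>j<m. K (Ys!j) (xs!j)) * T c xs = Cst c * (\<Prod>j<m. g j (xs!j))"
          by (simp add: g_def prod.distrib mult.left_commute)
      qed
      also have "\<dots> = Cst c * (\<integral>\<^sup>+ xs. (\<Prod>j<m. g j (xs!j)) \<partial>count_space {xs. length xs = m})"
        by (rule nn_integral_cmult) simp
      also have "\<dots> = Cst c * (\<Prod>j<m. \<Sum>X\<in>A. g j X)"
        by (subst PI[OF finA]) (auto simp: g_def ks A_def)
      also have "\<dots> = Cst c * (\<Prod>j<m. ennreal (R (c j)) * P (c j) (Ys!j))"
        by (simp add: Pval g_def sum_distrib_left mult.left_commute)
      also have "\<dots> = (\<Prod>i\<in>{1..n}. Bset (R i) (P i) {j\<in>{..<m}. c j = i} ((!) Ys))"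
        unfolding Cst_def by (rule T_inj[OF c[unfolded C_def] _ True, symmetric]) simp
      finally show ?thesis .
    qed
  qed
  also have "\<dots> = mb_dens n R P Ys"
    by (simp add: mb_MB MB_def C_def m_def)
  finally show ?thesis unfolding m_def P_def .
qed



definition ext_h :: "nat \<Rightarrow> nat \<Rightarrow> (nat \<Rightarrow> nat) \<Rightarrow> nat \<Rightarrow> nat" where
  "ext_h n nb a = (\<lambda>i. if i \<le> n then a i else if i \<le> n + nb then 1 else undefined)"

lemma glob_hyps_ext:
  "glob_hyps (n + nb) (\<lambda>i. if i \<le> n then h i else 1) (\<lambda>i a. if i \<le> n then M i a else {})
       = ext_h n nb ` glob_hyps n h M"
proof
  show "ext_h n nb ` glob_hyps n h M \<subseteq> glob_hyps (n + nb) (\<lambda>i. if i \<le> n then h i else 1) (\<lambda>i a. if i \<le> n then M i a else {})"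
  proof
    fix a' assume "a' \<in> ext_h n nb ` glob_hyps n h M"
    then obtain a where a: "a \<in> glob_hyps n h M" and a': "a' = ext_h n nb a" by auto
    have "a \<in> Pi\<^sub>E {1..n} (\<lambda>i. {1..h i})" using a by (simp add: glob_hyps_def)
    then have "a' \<in> Pi\<^sub>E {1..n+nb} (\<lambda>i. {1..(if i \<le> n then h i else 1)})"
      unfolding a' ext_h_def by (auto simp: PiE_def Pi_def extensional_def)
    moreover have "\<forall>i\<in>{1..n+nb}. \<forall>j\<in>{1..n+nb}. i \<noteq> j \<longrightarrow>
        (if i \<le> n then M i (a' i) else {}) \<inter> (if j \<le> n then M j (a' j) else {}) = {}"
      using a unfolding a' ext_h_def glob_hyps_def by auto
    ultimately show "a' \<in> glob_hyps (n + nb) (\<lambda>i. if i \<le> n then h i else 1) (\<lambda>i a. if i \<le> n then M i a else {})"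
      by (simp add: glob_hyps_def)
  qed
next
  show "glob_hyps (n + nb) (\<lambda>i. if i \<le> n then h i else 1) (\<lambda>i a. if i \<le> n then M i a else {}) \<subseteq> ext_h n nb ` glob_hyps n h M"
  proof
    fix a' assume a': "a' \<in> glob_hyps (n + nb) (\<lambda>i. if i \<le> n then h i else 1) (\<lambda>i a. if i \<le> n then M i a else {})"
    define a where "a = restrict a' {1..n}"
    have P: "a' \<in> Pi\<^sub>E {1..n+nb} (\<lambda>i. {1..(if i \<le> n then h i else 1)})" using a' by (simp add: glob_hyps_def)
    have Dall: "\<forall>i\<in>{1..n+nb}. \<forall>j\<in>{1..n+nb}. i \<noteq> j \<longrightarrow>
        (if i \<le> n then M i (a' i) else {}) \<inter> (if j \<le> n then M j (a' j) else {}) = {}"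
      using a' by (simp add: glob_hyps_def)
    have D: "\<forall>i\<in>{1..n}. \<forall>j\<in>{1..n}. i \<noteq> j \<longrightarrow> M i (a i) \<inter> M j (a j) = {}"
    proof (intro ballI impI)
      fix i j assume i: "i \<in> {1..n}" and j: "j \<in> {1..n}" and ij: "i \<noteq> j"
      have "(if i \<le> n then M i (a' i) else {}) \<inter> (if j \<le> n then M j (a' j) else {}) = {}"
        using bspec[OF bspec[OF Dall, of i], of j] i j ij by auto
      then show "M i (a i) \<inter> M j (a j) = {}" using i j by (simp add: a_def)
    qed
    have "a \<in> Pi\<^sub>E {1..n} (\<lambda>i. {1..h i})"
      using P unfolding a_def by (auto simp: PiE_def Pi_def extensional_def)
    then have "a \<in> glob_hyps n h M"
      using D unfolding glob_hyps_def by simp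
    moreover have "a' = ext_h n nb a"
    proof
      fix i show "a' i = ext_h n nb a i"
      proof (cases "i = 0 \<or> i > n + nb")
        case True then show ?thesis using P by (auto simp: ext_h_def a_def PiE_def extensional_def)
      next
        case False
        then have "a' i \<in> {1..(if i \<le> n then h i else 1)}" using PiE_mem[OF P, of i] by auto
        then show ?thesis using False by (auto simp: ext_h_def a_def)
      qed
    qed
    ultimately show "a' \<in> ext_h n nb ` glob_hyps n h M" by blast
  qed
qed

lemma inj_ext_h: "inj_on (ext_h n nb) (glob_hyps n h M)"
proof
  fix a b assume a: "a \<in> glob_hyps n h M" and b: "b \<in> glob_hyps n h M" and e: "ext_h n nb a = ext_h n nb b"
  show "a = b"
  proof
    fix i show "a i = b i"
    proof (cases "i \<in> {1..n}")
      case True then show ?thesis using fun_cong[OF e, of i] by (simp add: ext_h_def)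
    next
      case False then show ?thesis using a b by (auto simp: glob_hyps_def PiE_def extensional_def)
    qed
  qed
qed

lemma prod_ext_h:
  "(\<Prod>i\<in>{1..n+nb}. (if i \<le> n then w i (ext_h n nb a i) else 1)) = (\<Prod>i\<in>{1..n}. (w i (a i) :: real))"
  by (rule prod.mono_neutral_cong_right) (auto simp: ext_h_def)

lemma weight_ext_h:
  assumes "a \<in> glob_hyps n h M"
  shows "glob_weight (n + nb) (\<lambda>i. if i \<le> n then h i else 1) (\<lambda>i a. if i \<le> n then w i a else 1)
           (\<lambda>i a. if i \<le> n then M i a else {}) (ext_h n nb a) = glob_weight n h w M a"
proof -
  have "(\<Sum>b\<in>glob_hyps (n + nb) (\<lambda>i. if i \<le> n then h i else 1) (\<lambda>i a. if i \<le> n then M i a else {}).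
           \<Prod>i\<in>{1..n+nb}. (if i \<le> n then w i (b i) else 1))
      = (\<Sum>b\<in>glob_hyps n h M. \<Prod>i\<in>{1..n+nb}. (if i \<le> n then w i (ext_h n nb b i) else 1))"
    unfolding glob_hyps_ext by (subst sum.reindex[OF inj_ext_h]) (simp add: comp_def)
  also have "\<dots> = (\<Sum>b\<in>glob_hyps n h M. \<Prod>i\<in>{1..n}. w i (b i))"
    by (simp only: prod_ext_h)
  finally show ?thesis
    unfolding glob_weight_def using prod_ext_h[where n=n and nb=nb and w=w and a=a]
    by (simp add: if_distrib cong: if_cong)
qed



lemma inv_fact_ennreal: "ennreal (1 / fact m) * of_nat (fact m) = 1"
proof -
  have "(of_nat (fact m) :: ennreal) = ennreal (fact m)"
    by (metis ennreal_of_nat_eq_real_of_nat of_nat_fact)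
  moreover have "ennreal (1 / fact m) * ennreal (fact m) = ennreal (1 / fact m * fact m)"
    by (rule ennreal_mult[symmetric]) auto
  moreover have "1 / fact m * fact m = (1::real)" by simp
  ultimately show ?thesis by (metis ennreal_1)
qed

lemma suminf_single_ennreal: "(\<Sum>m. if c = m then v else (0::ennreal)) = v"
proof -
  have "(\<lambda>m. if m = c then v else (0::ennreal)) sums v" using sums_single[of c "\<lambda>_. v"] by simp
  then show ?thesis by (simp add: sums_iff eq_commute)
qed

lemma pi_coef_supp:
  "X' \<notin> {Traj (tbeg Y) (tend Y) (tstates Y), Traj (tbeg Y) (tend Y - 1) (butlast (tstates Y))}
   \<Longrightarrow> ennreal (pi_coef k PS pix Y X') = 0"
  by (cases X') (auto simp: pi_coef_def)

theorem theorem2: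
  fixes k n nb :: nat
    and h :: "nat \<Rightarrow> nat"
    and w r :: "nat \<Rightarrow> nat \<Rightarrow> real"
    and f :: "nat \<Rightarrow> nat \<Rightarrow> (real ^ 'd) traj \<Rightarrow> ennreal"
    and M :: "nat \<Rightarrow> nat \<Rightarrow> (nat \<times> nat) set"
    and rb :: "nat \<Rightarrow> real"
    and fb :: "nat \<Rightarrow> real ^ 'd \<Rightarrow> ennreal"
    and PS :: "real ^ 'd \<Rightarrow> real"
    and pix :: "real ^ 'd \<Rightarrow> real ^ 'd \<Rightarrow> real"
  assumes "k \<ge> 1"
    and "\<And>i a. 0 \<le> w i a"
    and "\<And>i a. 0 \<le> r i a \<and> r i a \<le> 1"
    and "\<And>i a X. X \<notin> traj_space (k - 1) \<Longrightarrow> f i a X = 0"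
    and "\<And>i a \<tau> j j'. (\<tau>, j) \<in> M i a \<Longrightarrow> (\<tau>, j') \<in> M i a \<Longrightarrow> j = j'"
    and "\<And>l. 0 \<le> rb l \<and> rb l \<le> 1"
    and "\<And>x. 0 \<le> PS x \<and> PS x \<le> 1"
    and "\<And>x x'. 0 \<le> pix x x'"
  shows
   "(\<forall>Xs. set Xs \<subseteq> traj_space k \<longrightarrow>
       ck_pred k PS pix (mb_dens nb rb (\<lambda>l. birth_traj k (fb l))) (mbm_dens n h w r f M) Xs =
       mbm_dens (n + nb)
         (\<lambda>i. if i \<le> n then h i else 1)
         (\<lambda>i a. if i \<le> n then w i a else 1)
         (\<lambda>i a. if i \<le> n then r i a else rb (i - n))
         (\<lambda>i a. if i \<le> n then traj_pred k PS pix (f i a) else birth_traj k (fb (i - n)))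
         (\<lambda>i a. if i \<le> n then M i a else {})
         Xs)
    \<and> glob_hyps (n + nb) (\<lambda>i. if i \<le> n then h i else 1) (\<lambda>i a. if i \<le> n then M i a else {})
       = (\<lambda>a i. if i \<le> n then a i else if i \<le> n + nb then 1 else undefined) ` glob_hyps n h M"
proof -
  define G where "G = glob_hyps n h M"
  define wt where "wt a = glob_weight n h w M a" for a
  define K where "K Y X = ennreal (pi_coef k PS pix Y X)" for Y X :: "(real ^ 'd) traj"
  define supp where "supp Y = {Traj (tbeg Y) (tend Y) (tstates Y), Traj (tbeg Y) (tend Y - 1) (butlast (tstates Y))}"
    for Y :: "(real ^ 'd) traj"
  define Fold where "Fold = mbm_dens n h w r f M"
  define Pa where "Pa a = (\<lambda>i. traj_pred k PS pix (f i (a i)))" for a :: "nat \<Rightarrow> nat"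
  define Q where "Q Ys = (\<Sum>a\<in>G. ennreal (wt a) * mb_dens n (\<lambda>i. r i (a i)) (Pa a) Ys)" for Ys
  define fbirth where "fbirth = mb_dens nb rb (\<lambda>l. birth_traj k (fb l))"
  have fsupp: "finite (supp Y)" for Y unfolding supp_def by simp
  have ksupp: "X \<notin> supp Y \<Longrightarrow> K Y X = 0" for X Y unfolding K_def supp_def by (rule pi_coef_supp)
  have finG: "finite G" unfolding G_def glob_hyps_def by (rule finite_subset[of _ "Pi\<^sub>E {1..n} (\<lambda>i. {1..h i})"]) (auto intro: finite_PiE)
  have predP: "(\<lambda>i Y. \<integral>\<^sup>+X. K Y X * f i (a i) X \<partial>count_space UNIV) = Pa a" for a
    unfolding Pa_def traj_pred_def K_def by (rule ext, rule ext) simp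
  have S1: "(\<integral>\<^sup>+Xs'. surv_trans k PS pix Ys Xs' * Fold Xs' \<partial>count_space {Xs'. length Xs' = m})
           = (if length Ys = m then of_nat (fact m) * Q Ys else 0)" for Ys m
  proof (cases "length Ys = m")
    case False
    have "(\<integral>\<^sup>+Xs'. surv_trans k PS pix Ys Xs' * Fold Xs' \<partial>count_space {Xs'. length Xs' = m})
             = (\<integral>\<^sup>+Xs'. 0 \<partial>count_space {Xs' :: (real ^ 'd) traj list. length Xs' = m})"
      by (intro nn_integral_cong) (use False in \<open>auto simp: surv_trans_def\<close>)
    then show ?thesis using False by simp
  next
    case True
    define Perm where "Perm = {\<sigma>. \<sigma> permutes {..<m}}"
    have finPerm: "finite Perm" unfolding Perm_def by (rule finite_permutations) simp
    have "(\<integral>\<^sup>+Xs'. surv_trans k PS pix Ys Xs' * Fold Xs' \<partial>count_space {Xs'. length Xs' = m})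
        = (\<integral>\<^sup>+Xs'. (\<Sum>\<sigma>\<in>Perm. \<Sum>a\<in>G. ennreal (wt a) *
              ((\<Prod>j<m. K (Ys ! \<sigma> j) (Xs' ! j)) * mb_dens n (\<lambda>i. r i (a i)) (\<lambda>i. f i (a i)) Xs'))
             \<partial>count_space {Xs'. length Xs' = m})"
      by (intro nn_integral_cong)
         (simp add: True surv_trans_def Perm_def Fold_def mbm_dens_def G_def wt_def K_def
                    sum_distrib_left sum_distrib_right mult.left_commute mult.assoc; subst sum.swap; simp)
    also have "\<dots> = (\<Sum>\<sigma>\<in>Perm. \<Sum>a\<in>G. ennreal (wt a) *
              (\<integral>\<^sup>+Xs'. (\<Prod>j<m. K (Ys ! \<sigma> j) (Xs' ! j)) * mb_dens n (\<lambda>i. r i (a i)) (\<lambda>i. f i (a i)) Xs'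
             \<partial>count_space {Xs'. length Xs' = m}))"
      by (simp add: nn_integral_sum nn_integral_cmult)
    also have "\<dots> = (\<Sum>\<sigma>\<in>Perm. Q Ys)"
      unfolding Q_def
    proof (intro sum.cong refl arg_cong2[where f = "(*)"])
      fix \<sigma> a assume \<sigma>: "\<sigma> \<in> Perm"
      define Ys\<sigma> where "Ys\<sigma> = map (\<lambda>j. Ys ! \<sigma> j) [0..<m]"
      have lenY: "length Ys\<sigma> = m" unfolding Ys\<sigma>_def by simp
      have "(\<integral>\<^sup>+Xs'. (\<Prod>j<m. K (Ys ! \<sigma> j) (Xs' ! j)) * mb_dens n (\<lambda>i. r i (a i)) (\<lambda>i. f i (a i)) Xs'
             \<partial>count_space {Xs'. length Xs' = m})
          = (\<integral>\<^sup>+Xs'. (\<Prod>j<length Ys\<sigma>. K (Ys\<sigma> ! j) (Xs' ! j)) * mb_dens n (\<lambda>i. r i (a i)) (\<lambda>i. f i (a i)) Xs'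
             \<partial>count_space {Xs'. length Xs' = length Ys\<sigma>})"
        unfolding lenY by (intro nn_integral_cong arg_cong2[where f = "(*)"] prod.cong refl) (simp add: Ys\<sigma>_def)
      also have "\<dots> = mb_dens n (\<lambda>i. r i (a i)) (Pa a) Ys\<sigma>"
        by (subst pred_mb[OF fsupp ksupp]) (simp_all add: predP)
      also have "\<dots> = mb_dens n (\<lambda>i. r i (a i)) (Pa a) Ys"
      proof -
        have p: "\<sigma> permutes {..<m}" using \<sigma> by (simp add: Perm_def)
        have d: "distinct (map \<sigma> [0..<m])"
          using permutes_inj[OF p] by (simp add: distinct_map inj_on_def inj_def)
        have st: "set (map \<sigma> [0..<m]) = {..<m}"
          using permutes_image[OF p] by (simp add: atLeast0LessThan)
        have "Ys\<sigma> = map ((!) Ys) (map \<sigma> [0..<m])" by (simp add: Ys\<sigma>_def)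
        then show ?thesis using MB_map[OF d, of n _ _ "(!) Ys"] st True by (simp add: mb_MB)
      qed
      finally show "(\<integral>\<^sup>+Xs'. (\<Prod>j<m. K (Ys ! \<sigma> j) (Xs' ! j)) * mb_dens n (\<lambda>i. r i (a i)) (\<lambda>i. f i (a i)) Xs'
             \<partial>count_space {Xs'. length Xs' = m}) = mb_dens n (\<lambda>i. r i (a i)) (Pa a) Ys" .
    qed
    also have "\<dots> = of_nat (fact m) * Q Ys"
      using card_permutations[of "{..<m}" m] by (simp add: Perm_def)
    finally show ?thesis using True by simp
  qed
  have LHS: "ck_pred k PS pix fbirth Fold Xs
      = (\<Sum>S\<in>Pow {..<length Xs}. fbirth (nths Xs ({..<length Xs} - S)) * Q (nths Xs S))" for Xs
  proof -
    define L where "L = {..<length Xs}"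
    have lenS: "length (nths Xs S) = card S" if "S \<in> Pow L" for S
    proof -
      have "{i. i < length Xs \<and> i \<in> S} = S" using that by (auto simp: L_def)
      then show ?thesis by (simp add: length_nths)
    qed
    have "ck_pred k PS pix fbirth Fold Xs
       = (\<Sum>m. ennreal (1 / fact m) * (\<integral>\<^sup>+Xs'. (\<Sum>S\<in>Pow L. fbirth (nths Xs (L - S)) *
             (surv_trans k PS pix (nths Xs S) Xs' * Fold Xs')) \<partial>count_space {Xs'. length Xs' = m}))"
      unfolding ck_pred_def set_int_dirac_def set_trans_def L_def
      by (simp add: sum_distrib_right mult.assoc)
    also have "\<dots> = (\<Sum>m. \<Sum>S\<in>Pow L. if card S = m then fbirth (nths Xs (L - S)) * Q (nths Xs S) else 0)"
    proof (rule arg_cong[where f = suminf], rule ext)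
      fix m
      have "ennreal (1 / fact m) * (\<integral>\<^sup>+Xs'. (\<Sum>S\<in>Pow L. fbirth (nths Xs (L - S)) *
             (surv_trans k PS pix (nths Xs S) Xs' * Fold Xs')) \<partial>count_space {Xs'. length Xs' = m})
          = ennreal (1 / fact m) * (\<Sum>S\<in>Pow L. fbirth (nths Xs (L - S)) *
             (if card S = m then of_nat (fact m) * Q (nths Xs S) else 0))"
        by (simp add: nn_integral_sum nn_integral_cmult S1, intro arg_cong[where f="\<lambda>x. ennreal (1 / fact m) * x"] sum.cong refl, simp add: lenS)
      also have "\<dots> = (\<Sum>S\<in>Pow L. if card S = m then fbirth (nths Xs (L - S)) * Q (nths Xs S) else 0)"
        unfolding sum_distrib_left
      proof (intro sum.cong refl)
        fix S
        have "ennreal (1 / fact m) * (fbirth (nths Xs (L - S)) * (of_nat (fact m) * Q (nths Xs S)))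
            = (ennreal (1 / fact m) * of_nat (fact m)) * (fbirth (nths Xs (L - S)) * Q (nths Xs S))"
          by (simp only: ac_simps)
        then show "ennreal (1 / fact m) * (fbirth (nths Xs (L - S)) *
             (if card S = m then of_nat (fact m) * Q (nths Xs S) else 0))
           = (if card S = m then fbirth (nths Xs (L - S)) * Q (nths Xs S) else 0)"
          by (simp only: inv_fact_ennreal mult_1) simp
      qed
      finally show "ennreal (1 / fact m) * (\<integral>\<^sup>+Xs'. (\<Sum>S\<in>Pow L. fbirth (nths Xs (L - S)) *
             (surv_trans k PS pix (nths Xs S) Xs' * Fold Xs')) \<partial>count_space {Xs'. length Xs' = m})
          = (\<Sum>S\<in>Pow L. if card S = m then fbirth (nths Xs (L - S)) * Q (nths Xs S) else 0)" .
    qed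
    also have "\<dots> = (\<Sum>S\<in>Pow L. \<Sum>m. if card S = m then fbirth (nths Xs (L - S)) * Q (nths Xs S) else 0)"
      by (rule suminf_sum) (rule summableI)
    also have "\<dots> = (\<Sum>S\<in>Pow L. fbirth (nths Xs (L - S)) * Q (nths Xs S))"
      by (simp only: suminf_single_ennreal)
    finally show ?thesis unfolding L_def .
  qed
  have RHS: "mbm_dens (n + nb)
         (\<lambda>i. if i \<le> n then h i else 1)
         (\<lambda>i a. if i \<le> n then w i a else 1)
         (\<lambda>i a. if i \<le> n then r i a else rb (i - n))
         (\<lambda>i a. if i \<le> n then traj_pred k PS pix (f i a) else birth_traj k (fb (i - n)))
         (\<lambda>i a. if i \<le> n then M i a else {})
         Xs
      = (\<Sum>S\<in>Pow {..<length Xs}. fbirth (nths Xs ({..<length Xs} - S)) * Q (nths Xs S))" for Xs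
  proof -
    define L where "L = {..<length Xs}"
    have mbsplit: "mb_dens (n + nb) (\<lambda>i. (if i \<le> n then r i (ext_h n nb a i) else rb (i - n)))
        (\<lambda>i. (if i \<le> n then traj_pred k PS pix (f i (ext_h n nb a i)) else birth_traj k (fb (i - n)))) Xs
       = (\<Sum>S\<in>Pow L. fbirth (nths Xs (L - S)) * mb_dens n (\<lambda>i. r i (a i)) (Pa a) (nths Xs S))" for a
    proof -
      have "mb_dens (n + nb) (\<lambda>i. (if i \<le> n then r i (ext_h n nb a i) else rb (i - n)))
        (\<lambda>i. (if i \<le> n then traj_pred k PS pix (f i (ext_h n nb a i)) else birth_traj k (fb (i - n)))) Xs
        = MB (n + nb) (\<lambda>i. if i \<le> n then r i (a i) else rb (i - n))
            (\<lambda>i. if i \<le> n then Pa a i else birth_traj k (fb (i - n))) L ((!) Xs)"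
        unfolding mb_MB L_def by (rule MB_cong_RF) (auto simp: ext_h_def Pa_def)
      also have "\<dots> = (\<Sum>S\<in>Pow L. MB nb rb (\<lambda>l. birth_traj k (fb l)) (L - S) ((!) Xs) *
                           MB n (\<lambda>i. r i (a i)) (Pa a) S ((!) Xs))"
        by (rule MB_union) (simp add: L_def)
      also have "\<dots> = (\<Sum>S\<in>Pow L. fbirth (nths Xs (L - S)) * mb_dens n (\<lambda>i. r i (a i)) (Pa a) (nths Xs S))"
        unfolding fbirth_def
        by (intro sum.cong refl arg_cong2[where f = "(*)"] mb_nths[symmetric]) (auto simp: L_def)
      finally show ?thesis .
    qed
    have "mbm_dens (n + nb)
         (\<lambda>i. if i \<le> n then h i else 1)
         (\<lambda>i a. if i \<le> n then w i a else 1)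
         (\<lambda>i a. if i \<le> n then r i a else rb (i - n))
         (\<lambda>i a. if i \<le> n then traj_pred k PS pix (f i a) else birth_traj k (fb (i - n)))
         (\<lambda>i a. if i \<le> n then M i a else {})
         Xs
       = (\<Sum>a\<in>G. ennreal (wt a) * (\<Sum>S\<in>Pow L. fbirth (nths Xs (L - S)) * mb_dens n (\<lambda>i. r i (a i)) (Pa a) (nths Xs S)))"
      unfolding mbm_dens_def glob_hyps_ext
      by (subst sum.reindex[OF inj_ext_h])
         (simp add: G_def wt_def weight_ext_h mbsplit[symmetric] if_distrib cong: sum.cong)
    also have "\<dots> = (\<Sum>S\<in>Pow L. fbirth (nths Xs (L - S)) * Q (nths Xs S))"
      unfolding Q_def sum_distrib_left
      by (subst sum.swap) (simp add: mult.left_commute)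
    finally show ?thesis unfolding L_def .
  qed
  have ext_eq: "(\<lambda>a i. if i \<le> n then a i else if i \<le> n + nb then 1 else undefined) = ext_h n nb"
    by (simp add: ext_h_def fun_eq_iff)
  show ?thesis
    using LHS RHS glob_hyps_ext[of n nb h M] unfolding ext_eq fbirth_def Fold_def by simp
qed

end
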